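(* Let $G$ be a harmonic-even partial cube and $F_{ab}$ a $\Theta$-class of $G$. If $\alpha$ is an automorphism of $G$ such that $v^{\alpha}=v$ and $u^{\alpha}=u$ for every edge $vu\in F_{ab}$, then $\alpha$ is the identity.
   Context: A partial cube is a graph isometrically embeddable into a hypercube. On edges define $ab\,\Theta\,xy$ iff $d(a,x)+d(b,y)\neq d(a,y)+d(b,x)$ ($d$ the shortest-path distance); in a partial cube this is an equivalence relation, and $F_{uv}$ denotes the $\Theta$-class of edge $uv$. A graph is harmonic-even if every vertex $v$ has a unique vertex $\bar v$ at distance $\mathrm{diam}(G)$ and $\bar u\bar v$ is an edge whenever $uv$ is an edge. $v^{\alpha}$ denotes the image of $v$ under $\alpha$. *)

theory Defs
  imports Main
begin

definition graph :: "'a set \<Rightarrow> ('a \<Rightarrow> 'a \<Rightarrow> bool) \<Rightarrow> bool" where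
  "graph V E \<longleftrightarrow> (\<forall>u v. E u v \<longrightarrow> u \<in> V \<and> v \<in> V) \<and> (\<forall>u v. E u v \<longrightarrow> E v u) \<and> (\<forall>v. \<not> E v v)"

fun walk :: "('a \<Rightarrow> 'a \<Rightarrow> bool) \<Rightarrow> 'a list \<Rightarrow> bool" where
  "walk E [] = False"
| "walk E [x] = True"
| "walk E (x # y # xs) = (E x y \<and> walk E (y # xs))"

definition gdist :: "('a \<Rightarrow> 'a \<Rightarrow> bool) \<Rightarrow> 'a \<Rightarrow> 'a \<Rightarrow> nat" where
  "gdist E u v = (LEAST n. \<exists>xs. walk E xs \<and> hd xs = u \<and> last xs = v \<and> length xs = Suc n)"

definition connected_graph :: "'a set \<Rightarrow> ('a \<Rightarrow> 'a \<Rightarrow> bool) \<Rightarrow> bool" where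
  "connected_graph V E \<longleftrightarrow> (\<forall>u\<in>V. \<forall>v\<in>V. \<exists>xs. walk E xs \<and> hd xs = u \<and> last xs = v)"

definition diam :: "'a set \<Rightarrow> ('a \<Rightarrow> 'a \<Rightarrow> bool) \<Rightarrow> nat" where
  "diam V E = Max {gdist E u v | u v. u \<in> V \<and> v \<in> V}"

text \<open>Partial cube: finite connected graph isometrically embeddable into a hypercube Q_n,
  whose vertices are the subsets of {..<n}, with Hamming distance = size of symmetric difference.\<close>
definition partial_cube :: "'a set \<Rightarrow> ('a \<Rightarrow> 'a \<Rightarrow> bool) \<Rightarrow> bool" where
  "partial_cube V E \<longleftrightarrow> graph V E \<and> finite V \<and> connected_graph V E \<and>
     (\<exists>(n::nat) (f :: 'a \<Rightarrow> nat set). (\<forall>u\<in>V. f u \<subseteq> {..<n}) \<and>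
        (\<forall>u\<in>V. \<forall>v\<in>V. card ((f u - f v) \<union> (f v - f u)) = gdist E u v))"

definition antipode :: "'a set \<Rightarrow> ('a \<Rightarrow> 'a \<Rightarrow> bool) \<Rightarrow> 'a \<Rightarrow> 'a" where
  "antipode V E v = (THE w. w \<in> V \<and> gdist E v w = diam V E)"

definition harmonic_even :: "'a set \<Rightarrow> ('a \<Rightarrow> 'a \<Rightarrow> bool) \<Rightarrow> bool" where
  "harmonic_even V E \<longleftrightarrow> (\<forall>v\<in>V. \<exists>!w. w \<in> V \<and> gdist E v w = diam V E) \<and>
     (\<forall>u v. E u v \<longrightarrow> E (antipode V E u) (antipode V E v))"

definition Theta :: "('a \<Rightarrow> 'a \<Rightarrow> bool) \<Rightarrow> 'a \<Rightarrow> 'a \<Rightarrow> 'a \<Rightarrow> 'a \<Rightarrow> bool" where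
  "Theta E a b x y \<longleftrightarrow> E a b \<and> E x y \<and>
     gdist E a x + gdist E b y \<noteq> gdist E a y + gdist E b x"

definition theta_class :: "('a \<Rightarrow> 'a \<Rightarrow> bool) \<Rightarrow> 'a \<Rightarrow> 'a \<Rightarrow> ('a \<times> 'a) set" where
  "theta_class E a b = {(x, y). Theta E a b x y}"

definition automorphism :: "'a set \<Rightarrow> ('a \<Rightarrow> 'a \<Rightarrow> bool) \<Rightarrow> ('a \<Rightarrow> 'a) \<Rightarrow> bool" where
  "automorphism V E \<alpha> \<longleftrightarrow> bij_betw \<alpha> V V \<and> (\<forall>u\<in>V. \<forall>v\<in>V. E u v \<longleftrightarrow> E (\<alpha> u) (\<alpha> v))"

end

theory Submission
  imports Defs
begin

definition symd :: "'b set \<Rightarrow> 'b set \<Rightarrow> 'b set" where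
  "symd A B = (A - B) \<union> (B - A)"

lemma walk_append: "walk E (xs @ y # ys) \<longleftrightarrow> walk E (xs @ [y]) \<and> walk E (y # ys)"
proof (induction xs)
  case Nil then show ?case by simp
next
  case (Cons x xs) then show ?case by (cases xs) auto
qed

lemma walk_cross:
  "walk E xs \<Longrightarrow> P (hd xs) \<Longrightarrow> \<not> P (last xs) \<Longrightarrow>
   \<exists>ys x y zs. xs = ys @ x # y # zs \<and> P x \<and> \<not> P y"
proof (induction E xs rule: walk.induct)
  case (1 E) then show ?case by simp
next
  case (2 E x) then show ?case by simp
next
  case (3 E x y xs)
  show ?case
  proof (cases "P y")
    case True
    with 3 obtain ys u v zs where "y # xs = ys @ u # v # zs" "P u" "\<not> P v" by auto
    then show ?thesis by (metis append_Cons)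
  next
    case False
    with 3 show ?thesis by (metis append_Nil list.sel(1))
  qed
qed

lemma gdist_le: "walk E xs \<Longrightarrow> gdist E (hd xs) (last xs) \<le> length xs - 1"
  unfolding gdist_def
  by (rule Least_le) (cases xs, auto)

lemma gdist_ex: "walk E xs \<Longrightarrow> hd xs = u \<Longrightarrow> last xs = v \<Longrightarrow>
  \<exists>ys. walk E ys \<and> hd ys = u \<and> last ys = v \<and> length ys = Suc (gdist E u v)"
proof -
  assume a: "walk E xs" "hd xs = u" "last xs = v"
  have "\<exists>n ys. walk E ys \<and> hd ys = u \<and> last ys = v \<and> length ys = Suc n"
    using a by (intro exI[of _ "length xs - 1"] exI[of _ xs]) (cases xs, auto)
  then show ?thesis unfolding gdist_def by (rule LeastI_ex)
qed

lemma gdist_refl: "gdist E u u = 0"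
  using gdist_le[of E "[u]"] by simp

lemma gdist_0: "walk E xs \<Longrightarrow> hd xs = u \<Longrightarrow> last xs = v \<Longrightarrow> gdist E u v = 0 \<Longrightarrow> u = v"
proof -
  assume "walk E xs" "hd xs = u" "last xs = v" "gdist E u v = 0"
  then obtain ys where "walk E ys" "hd ys = u" "last ys = v" "length ys = 1"
    using gdist_ex by fastforce
  then show "u = v" by (cases ys) auto
qed

lemma walk_map:
  "walk E xs \<Longrightarrow> (\<forall>x\<in>set xs. \<forall>y\<in>set xs. E x y \<longrightarrow> E (h x) (h y)) \<Longrightarrow> walk E (map h xs)"
  by (induction E xs rule: walk.induct) auto

lemma walk_set: "graph V E \<Longrightarrow> walk E xs \<Longrightarrow> hd xs \<in> V \<Longrightarrow> set xs \<subseteq> V"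
  by (induction E xs rule: walk.induct) (auto simp: graph_def)

lemma gdist_map:
  assumes g: "graph V E" and c: "connected_graph V E" and u: "u \<in> V" and v: "v \<in> V"
    and hV: "\<forall>x\<in>V. h x \<in> V" and hE: "\<forall>x\<in>V. \<forall>y\<in>V. E x y \<longrightarrow> E (h x) (h y)"
  shows "gdist E (h u) (h v) \<le> gdist E u v"
proof -
  obtain xs where "walk E xs" "hd xs = u" "last xs = v" using c u v unfolding connected_graph_def by blast
  then obtain ys where ys: "walk E ys" "hd ys = u" "last ys = v" "length ys = Suc (gdist E u v)"
    using gdist_ex by metis
  have ne: "ys \<noteq> []" using ys by auto
  have "set ys \<subseteq> V" using walk_set[OF g ys(1)] ys u by auto
  then have "walk E (map h ys)" using walk_map[OF ys(1)] hE by blast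
  from gdist_le[OF this] ne ys show ?thesis by (simp add: hd_map last_map)
qed

lemma card_symd_single: "finite M \<Longrightarrow> j \<notin> M \<Longrightarrow> card (symd M {j}) = Suc (card M)"
proof -
  assume "finite M" "j \<notin> M"
  then have "symd M {j} = insert j M" unfolding symd_def by auto
  then show ?thesis using \<open>finite M\<close> \<open>j \<notin> M\<close> by simp
qed

lemma card_symd_in: "finite M \<Longrightarrow> j \<in> M \<Longrightarrow> card (symd M {j}) = card M - 1"
proof -
  assume "finite M" "j \<in> M"
  then have "symd M {j} = M - {j}" unfolding symd_def by auto
  then show ?thesis using \<open>finite M\<close> \<open>j \<in> M\<close> by simp
qed


lemma le_diam: "finite V \<Longrightarrow> u \<in> V \<Longrightarrow> v \<in> V \<Longrightarrow> gdist E u v \<le> diam V E"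
  unfolding diam_def by (rule Max_ge) (auto intro: finite_image_set2)

lemma antip:
  assumes "harmonic_even V E" "u \<in> V"
  shows "antipode V E u \<in> V \<and> gdist E u (antipode V E u) = diam V E"
proof -
  have "\<exists>!w. w \<in> V \<and> gdist E u w = diam V E" using assms unfolding harmonic_even_def by blast
  from theI'[OF this] show ?thesis unfolding antipode_def .
qed

lemma key:
  assumes pc: "partial_cube V E" and he: "harmonic_even V E" and u: "u \<in> V" and v: "v \<in> V"
  shows "gdist E u v + gdist E v (antipode V E u) = diam V E"
proof -
  have g: "graph V E" and fin: "finite V" and c: "connected_graph V E"
    using pc unfolding partial_cube_def by auto
  obtain n f where fV: "\<forall>u\<in>V. f u \<subseteq> {..<(n::nat)}"
    and fd: "\<forall>u\<in>V. \<forall>v\<in>V. card (symd (f u) (f v)) = gdist E u v"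
    using pc unfolding partial_cube_def symd_def by blast
  define \<sigma> where "\<sigma> = antipode V E"
  define D where "D = diam V E"
  define M where "M x = symd (f x) (f (\<sigma> x))" for x
  have finf: "finite (f x)" if "x \<in> V" for x using fV that finite_subset by blast
  have \<sigma>V: "\<sigma> x \<in> V" and cardM: "card (M x) = D" if "x \<in> V" for x
    using antip[OF he that] fd that unfolding M_def \<sigma>_def D_def by auto
  have finM: "finite (M x)" if "x \<in> V" for x
    using finf that \<sigma>V unfolding M_def symd_def by auto
  have leD: "card (symd (f x) (f y)) \<le> D" if "x \<in> V" "y \<in> V" for x y
    using fd le_diam[OF fin that] that unfolding D_def by auto
  have EV: "x \<in> V \<and> y \<in> V" if "E x y" for x y using g that unfolding graph_def by auto
  have edge1: "\<exists>j. f y = symd (f x) {j}" if "E x y" for x y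
  proof -
    have "x \<noteq> y" using g that unfolding graph_def by auto
    have "gdist E x y \<le> 1" using gdist_le[of E "[x,y]"] that by simp
    moreover have "gdist E x y \<noteq> 0" using gdist_0[of E "[x,y]" x y] that \<open>x \<noteq> y\<close> by auto
    ultimately have "card (symd (f x) (f y)) = 1" using fd EV[OF that] by auto
    then obtain j where "symd (f x) (f y) = {j}" by (rule card_1_singletonE)
    then have "f y = symd (f x) {j}" unfolding symd_def by blast
    then show ?thesis ..
  qed
  have inM: "j \<in> M x" if "x \<in> V" "finite (M x)" "card (symd (M x) {j}) \<le> D" for x j
    using card_symd_single[of "M x" j] that cardM by fastforce
  have edgeM: "j \<in> M x \<and> M y = M x" if e: "E x y" and fy: "f y = symd (f x) {j}" for x y j
  proof -
    have x: "x \<in> V" and y: "y \<in> V" using EV[OF e] by auto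
    have "E (\<sigma> x) (\<sigma> y)" using he e unfolding harmonic_even_def \<sigma>_def by blast
    then obtain j' where fy': "f (\<sigma> y) = symd (f (\<sigma> x)) {j'}" using edge1 by blast
    have "symd (f y) (f (\<sigma> x)) = symd (M x) {j}" unfolding fy M_def symd_def by blast
    then have j: "j \<in> M x" using inM[OF x finM[OF x]] leD[OF y \<sigma>V[OF x]] by metis
    have "symd (f x) (f (\<sigma> y)) = symd (M x) {j'}" unfolding fy' M_def symd_def by blast
    then have j': "j' \<in> M x" using inM[OF x finM[OF x]] leD[OF x \<sigma>V[OF y]] by metis
    have My: "M y = symd (symd (M x) {j}) {j'}" unfolding M_def fy fy' symd_def by blast
    have "j = j'"
    proof (rule ccontr)
      assume "j \<noteq> j'"
      then have "M y = M x - {j, j'}" using My j j' unfolding symd_def by blast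
      then have "card (M y) = card (M x) - 2" using j j' \<open>j \<noteq> j'\<close> finM[OF x] by simp
      moreover have "card (M x) \<ge> 2"
      proof -
        have "{j, j'} \<subseteq> M x" using j j' by auto
        then have "card {j, j'} \<le> card (M x)" using finM[OF x] card_mono by blast
        then show ?thesis using \<open>j \<noteq> j'\<close> by simp
      qed
      ultimately show False using cardM[OF x] cardM[OF y] by simp
    qed
    then have "M y = M x" using My unfolding symd_def by blast
    then show ?thesis using j by simp
  qed
  have walkM: "M (last (x # xs)) = M x \<and> symd (f (last (x # xs))) (f x) \<subseteq> M x"
    if "walk E (x # xs)" "x \<in> V" for x xs
    using that
  proof (induction xs arbitrary: x)
    case Nil then show ?case unfolding symd_def by simp
  next
    case (Cons y ys)
    have e: "E x y" and w: "walk E (y # ys)" using Cons.prems by auto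
    have yV: "y \<in> V" using EV[OF e] by simp
    obtain j where fy: "f y = symd (f x) {j}" using edge1[OF e] by blast
    have jm: "j \<in> M x" and My: "M y = M x" using edgeM[OF e fy] by auto
    have IH: "M (last (y # ys)) = M y" "symd (f (last (y # ys))) (f y) \<subseteq> M y"
      using Cons.IH[OF w yV] by auto
    have "symd (f (last (y # ys))) (f x) \<subseteq> symd (f (last (y # ys))) (f y) \<union> {j}"
      unfolding fy symd_def by blast
    then show ?case using IH My jm by auto
  qed
  obtain xs where xs: "walk E xs" "hd xs = u" "last xs = v" using c u v unfolding connected_graph_def by blast
  then obtain ys where xs': "xs = u # ys" by (cases xs) auto
  have Mv: "symd (f v) (f u) \<subseteq> M u" using walkM[of u ys] xs xs' u by auto
  define X where "X = symd (f v) (f u)"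
  have fs: "f (\<sigma> u) = symd (f u) (M u)" unfolding M_def symd_def by blast
  have d1: "gdist E u v = card X" using fd u v unfolding X_def symd_def by (metis Un_commute)
  have "symd (f v) (f (\<sigma> u)) = M u - X" using Mv unfolding fs X_def symd_def by blast
  then have d2: "gdist E v (antipode V E u) = card (M u - X)" using fd v \<sigma>V[OF u] unfolding \<sigma>_def by metis
  have "card X + card (M u - X) = card (M u)"
  proof -
    have fX: "finite X" using Mv finM[OF u] finite_subset unfolding X_def by blast
    have "card (M u - X) = card (M u) - card X"
      using card_Diff_subset[OF fX] Mv unfolding X_def by blast
    moreover have "card X \<le> card (M u)" using card_mono[OF finM[OF u]] Mv unfolding X_def by blast
    ultimately show ?thesis by simp
  qed
  then show ?thesis using d1 d2 cardM[OF u] unfolding D_def by simp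
qed


theorem lemma3:
  fixes V :: "'a set" and E :: "'a \<Rightarrow> 'a \<Rightarrow> bool" and \<alpha> :: "'a \<Rightarrow> 'a" and a b :: 'a
  assumes "partial_cube V E" and "harmonic_even V E"
    and "E a b"
    and "automorphism V E \<alpha>"
    and "\<forall>(v, u) \<in> theta_class E a b. \<alpha> v = v \<and> \<alpha> u = u"
  shows "\<forall>v\<in>V. \<alpha> v = v"
proof
  note pc = assms(1) and he = assms(2) and ab = assms(3) and aut = assms(4) and fxd = assms(5)
  have g: "graph V E" and fin: "finite V" and c: "connected_graph V E"
    using pc unfolding partial_cube_def by auto
  obtain n f where fV: "\<forall>u\<in>V. f u \<subseteq> {..<(n::nat)}"
    and fd: "\<forall>u\<in>V. \<forall>v\<in>V. card (symd (f u) (f v)) = gdist E u v"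
    using pc unfolding partial_cube_def symd_def by blast
  have finf: "finite (f x)" if "x \<in> V" for x using fV that finite_subset by blast
  have EV: "x \<in> V \<and> y \<in> V" if "E x y" for x y using g that unfolding graph_def by auto
  have sym: "gdist E x y = gdist E y x" if "x \<in> V" "y \<in> V" for x y
    using fd that unfolding symd_def by (metis Un_commute)
  have aV: "a \<in> V" and bV: "b \<in> V" using EV[OF ab] by auto
  have "a \<noteq> b" using g ab unfolding graph_def by auto
  have dab: "gdist E a b = 1"
  proof -
    have "gdist E a b \<le> 1" using gdist_le[of E "[a,b]"] ab by simp
    moreover have "gdist E a b \<noteq> 0" using gdist_0[of E "[a,b]" a b] ab \<open>a \<noteq> b\<close> by auto
    ultimately show ?thesis by simp
  qed
  have fixed: "\<alpha> x = x" if "Theta E a b x y" for x y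
    using fxd that unfolding theta_class_def by auto
  have "Theta E a b a b" unfolding Theta_def using ab dab sym[OF aV bV] by (simp add: gdist_refl)
  then have fa: "\<alpha> a = a" and fb: "\<alpha> b = b" using fxd unfolding theta_class_def by auto
  have bij: "bij_betw \<alpha> V V" and autE: "\<forall>u\<in>V. \<forall>v\<in>V. E u v \<longleftrightarrow> E (\<alpha> u) (\<alpha> v)"
    using aut unfolding automorphism_def by simp_all
  define \<beta> where "\<beta> = inv_into V \<alpha>"
  have \<alpha>V: "\<alpha> x \<in> V" if "x \<in> V" for x by (rule bij_betw_apply[OF bij that])
  have \<beta>V: "\<beta> x \<in> V" if "x \<in> V" for x
    unfolding \<beta>_def by (rule bij_betw_apply[OF bij_betw_inv_into[OF bij] that])
  have \<beta>\<alpha>: "\<beta> (\<alpha> x) = x" if "x \<in> V" for x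
    using bij that unfolding \<beta>_def bij_betw_def by (simp add: inv_into_f_f)
  have \<alpha>\<beta>: "\<alpha> (\<beta> x) = x" if "x \<in> V" for x
    using bij that unfolding \<beta>_def bij_betw_def by (simp add: f_inv_into_f)
  have \<beta>E: "\<forall>x\<in>V. \<forall>y\<in>V. E x y \<longrightarrow> E (\<beta> x) (\<beta> y)"
  proof (intro ballI impI)
    fix x y assume "x \<in> V" "y \<in> V" "E x y"
    then have "E (\<alpha> (\<beta> x)) (\<alpha> (\<beta> y))" using \<alpha>\<beta> by simp
    then show "E (\<beta> x) (\<beta> y)" using autE \<beta>V \<open>x \<in> V\<close> \<open>y \<in> V\<close> by blast
  qed
  have dpres: "gdist E (\<alpha> x) (\<alpha> y) = gdist E x y" if "x \<in> V" "y \<in> V" for x y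
  proof -
    have 1: "gdist E (\<alpha> x) (\<alpha> y) \<le> gdist E x y"
      using gdist_map[OF g c that, of \<alpha>] \<alpha>V autE by blast
    have "gdist E (\<beta> (\<alpha> x)) (\<beta> (\<alpha> y)) \<le> gdist E (\<alpha> x) (\<alpha> y)"
      using gdist_map[OF g c \<alpha>V[OF that(1)] \<alpha>V[OF that(2)], of \<beta>] \<beta>V \<beta>E by blast
    then show ?thesis using 1 \<beta>\<alpha> that by simp
  qed
  have par: "gdist E a v \<noteq> gdist E b v" if v: "v \<in> V" for v
  proof -
    have "card (symd (f a) (f b)) = 1" using fd aV bV dab by auto
    then obtain j where j: "symd (f a) (f b) = {j}" by (rule card_1_singletonE)
    have "symd (f b) (f v) = symd (symd (f a) (f v)) {j}"
      using j unfolding symd_def by blast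
    moreover have "finite (symd (f a) (f v))" using finf aV v unfolding symd_def by auto
    ultimately have "card (symd (f b) (f v)) \<noteq> card (symd (f a) (f v))"
    proof (cases "j \<in> symd (f a) (f v)")
      case True
      then have "card (symd (f a) (f v)) > 0"
        using \<open>finite (symd (f a) (f v))\<close> card_gt_0_iff by blast
      then show ?thesis using card_symd_in[OF \<open>finite (symd (f a) (f v))\<close> True]
        \<open>symd (f b) (f v) = _\<close> by simp
    next
      case False
      then show ?thesis using card_symd_single[OF \<open>finite (symd (f a) (f v))\<close> False]
        \<open>symd (f b) (f v) = _\<close> by simp
    qed
    then show ?thesis using fd aV bV v by auto
  qed
  fix w assume w: "w \<in> V"
  define z where "z = \<alpha> w"
  define \<sigma> where "\<sigma> = antipode V E"
  define D where "D = diam V E"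
  have zV: "z \<in> V" using \<alpha>V w unfolding z_def by simp
  have sz: "\<sigma> z \<in> V" using antip[OF he zV] unfolding \<sigma>_def by simp
  have K: "gdist E x y + gdist E y (\<sigma> x) = D" if "x \<in> V" "y \<in> V" for x y
    using key[OF pc he that] unfolding \<sigma>_def D_def .
  have za: "gdist E a z = gdist E a w" using dpres[OF aV w] fa unfolding z_def by simp
  have zb: "gdist E b z = gdist E b w" using dpres[OF bV w] fb unfolding z_def by simp
  have Ka: "gdist E a z + gdist E a (\<sigma> z) = D" using K[OF zV aV] sym[OF zV aV] by simp
  have Kb: "gdist E b z + gdist E b (\<sigma> z) = D" using K[OF zV bV] sym[OF zV bV] by simp
  obtain ps0 where "walk E ps0" "hd ps0 = w" "last ps0 = \<sigma> z"
    using c w sz unfolding connected_graph_def by blast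
  then obtain ps where ps: "walk E ps" "hd ps = w" "last ps = \<sigma> z" "length ps = Suc (gdist E w (\<sigma> z))"
    using gdist_ex by metis
  have split: "gdist E w x + gdist E x (\<sigma> z) \<le> gdist E w (\<sigma> z)"
    if "ps = ys @ x # y # zs" for ys x y zs
  proof -
    have "walk E (ys @ [x])" "walk E (x # y # zs)" using ps(1) walk_append[of E ys x "y # zs"] that by simp_all
    from gdist_le[OF this(1)] gdist_le[OF this(2)]
    have "gdist E (hd (ys @ [x])) x \<le> length ys" "gdist E x (last ps) \<le> Suc (length zs)"
      using that by auto
    moreover have "hd (ys @ [x]) = w" using ps(2) that by (cases ys) auto
    ultimately show ?thesis using ps that by simp
  qed
  have "\<exists>x \<in> V. \<alpha> x = x \<and> gdist E w x + gdist E x (\<sigma> z) \<le> gdist E w (\<sigma> z)"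
  proof (cases "gdist E a w < gdist E b w")
    case True
    have "\<not> gdist E a (\<sigma> z) < gdist E b (\<sigma> z)" using True za zb Ka Kb by linarith
    then obtain ys x y zs where xy: "ps = ys @ x # y # zs" "gdist E a x < gdist E b x"
      "\<not> gdist E a y < gdist E b y"
      using walk_cross[OF ps(1), of "\<lambda>v. gdist E a v < gdist E b v"] ps True by auto
    have e: "E x y" using ps(1) xy(1) walk_append[of E ys x "y # zs"] by simp
    have "gdist E b y < gdist E a y" using xy par EV[OF e] by (meson linorder_neqE_nat)
    then have "Theta E a b x y" unfolding Theta_def using ab e xy by linarith
    then show ?thesis using fixed split[OF xy(1)] EV[OF e] by blast
  next
    case False
    then have F: "gdist E b w < gdist E a w" using par[OF w] by linarith
    have "\<not> gdist E b (\<sigma> z) < gdist E a (\<sigma> z)" using F za zb Ka Kb by linarith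
    then obtain ys x y zs where xy: "ps = ys @ x # y # zs" "gdist E b x < gdist E a x"
      "\<not> gdist E b y < gdist E a y"
      using walk_cross[OF ps(1), of "\<lambda>v. gdist E b v < gdist E a v"] ps F by auto
    have e: "E x y" using ps(1) xy(1) walk_append[of E ys x "y # zs"] by simp
    have "gdist E a y < gdist E b y" using xy par EV[OF e] by (meson linorder_neqE_nat)
    then have "Theta E a b x y" unfolding Theta_def using ab e xy by linarith
    then show ?thesis using fixed split[OF xy(1)] EV[OF e] by blast
  qed
  then obtain x where x: "x \<in> V" "\<alpha> x = x" "gdist E w x + gdist E x (\<sigma> z) \<le> gdist E w (\<sigma> z)"
    by blast
  have "gdist E z x = gdist E w x" using dpres[OF w x(1)] x(2) unfolding z_def by simp
  then have "gdist E z w = 0" using K[OF zV w] K[OF zV x(1)] x(3) by linarith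
  moreover obtain qs where "walk E qs" "hd qs = z" "last qs = w"
    using c w zV unfolding connected_graph_def by blast
  ultimately have "z = w" using gdist_0 by metis
  then show "\<alpha> w = w" unfolding z_def .
qed

end
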